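(* For every (labelled) tree $T$ there exists a $T$-peeling mapping.
   Context: For a tree $T$, let $\mathcal{S}(T)$ be the family of all subtrees of $T$ (connected subgraphs of $T$, which are trees). A mapping $\nu:\mathcal{S}(T)\to 2^{V(T)}$ is $T$-peeling if (i) $\nu(\{v\})=\{v\}$ for every single-vertex subtree $\{v\}$, $v\in V(T)$, and (ii) for every subtree $T'$ with $|V(T')|\ge 2$ we have $\nu(T')=\{u,w\}$ where $u,w$ are two distinct leaves of $T'$ such that $u\in\nu(T'-w)$ and $w\in\nu(T'-u)$. *)

theory Defs
  imports Main
begin

text \<open>A finite simple graph is given by a vertex set V and a symmetric irreflexive
adjacency relation E.  Subgraphs/subtrees are identified with their vertex sets.\<close>

definition adj_in :: "('a \<Rightarrow> 'a \<Rightarrow> bool) \<Rightarrow> 'a set \<Rightarrow> ('a \<times> 'a) set" where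
  "adj_in E S = {(x, y). x \<in> S \<and> y \<in> S \<and> E x y}"

definition connected_on :: "('a \<Rightarrow> 'a \<Rightarrow> bool) \<Rightarrow> 'a set \<Rightarrow> bool" where
  "connected_on E S \<longleftrightarrow> (\<forall>x\<in>S. \<forall>y\<in>S. (x, y) \<in> (adj_in E S)\<^sup>*)"

definition is_cycle :: "('a \<Rightarrow> 'a \<Rightarrow> bool) \<Rightarrow> 'a list \<Rightarrow> bool" where
  "is_cycle E xs \<longleftrightarrow> length xs \<ge> 3 \<and> distinct xs \<and>
     (\<forall>i. Suc i < length xs \<longrightarrow> E (xs ! i) (xs ! Suc i)) \<and> E (last xs) (hd xs)"

definition is_tree :: "'a set \<Rightarrow> ('a \<Rightarrow> 'a \<Rightarrow> bool) \<Rightarrow> bool" where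
  "is_tree V E \<longleftrightarrow> finite V \<and> V \<noteq> {} \<and>
     (\<forall>x y. E x y \<longrightarrow> x \<in> V \<and> y \<in> V) \<and>
     (\<forall>x y. E x y \<longrightarrow> E y x) \<and> (\<forall>x. \<not> E x x) \<and>
     connected_on E V \<and> \<not> (\<exists>xs. set xs \<subseteq> V \<and> is_cycle E xs)"

text \<open>Subtrees of T (connected subgraphs), represented by their vertex sets:
a connected subgraph of a tree is the induced subgraph on its vertex set.\<close>
definition subtrees :: "'a set \<Rightarrow> ('a \<Rightarrow> 'a \<Rightarrow> bool) \<Rightarrow> 'a set set" where
  "subtrees V E = {S. S \<noteq> {} \<and> S \<subseteq> V \<and> connected_on E S}"

definition is_leaf_in :: "('a \<Rightarrow> 'a \<Rightarrow> bool) \<Rightarrow> 'a set \<Rightarrow> 'a \<Rightarrow> bool" where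
  "is_leaf_in E S v \<longleftrightarrow> v \<in> S \<and> card {u \<in> S. E v u} = 1"

definition peeling :: "'a set \<Rightarrow> ('a \<Rightarrow> 'a \<Rightarrow> bool) \<Rightarrow> ('a set \<Rightarrow> 'a set) \<Rightarrow> bool" where
  "peeling V E \<nu> \<longleftrightarrow>
     (\<forall>v\<in>V. \<nu> {v} = {v}) \<and>
     (\<forall>S\<in>subtrees V E. card S \<ge> 2 \<longrightarrow>
        (\<exists>u w. u \<noteq> w \<and> is_leaf_in E S u \<and> is_leaf_in E S w \<and> \<nu> S = {u, w} \<and>
               u \<in> \<nu> (S - {w}) \<and> w \<in> \<nu> (S - {u})))"

end

theory Submission
  imports Defs
begin

definition is_path :: "('a \<Rightarrow> 'a \<Rightarrow> bool) \<Rightarrow> 'a set \<Rightarrow> 'a list \<Rightarrow> bool" where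
  "is_path E S xs \<longleftrightarrow> distinct xs \<and> set xs \<subseteq> S \<and> (\<forall>i. Suc i < length xs \<longrightarrow> E (xs!i) (xs!Suc i))"

lemma has_nbr:
  assumes "connected_on E S" "x \<in> S" "y \<in> S" "x \<noteq> y"
  shows "\<exists>z\<in>S. E x z"
proof -
  have "(x, y) \<in> (adj_in E S)\<^sup>*" using assms unfolding connected_on_def by blast
  then show ?thesis using assms(4)
    by (cases rule: converse_rtranclE) (auto simp: adj_in_def)
qed

lemma leaf_nbr:
  assumes "is_leaf_in E S l"
  obtains p where "{u\<in>S. E l u} = {p}"
  using assms unfolding is_leaf_in_def by (meson card_1_singletonE)

lemma remove_leaf_conn:
  assumes conn: "connected_on E S" and lf: "{u\<in>S. E l u} = {p}" and sym: "\<forall>x y. E x y \<longrightarrow> E y x"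
    and irr: "\<forall>x. \<not> E x x"
  shows "connected_on E (S - {l})"
  unfolding connected_on_def
proof (intro ballI)
  fix x y assume x: "x \<in> S - {l}" and y: "y \<in> S - {l}"
  have pS: "p \<in> S" and Elp: "E l p" using lf by auto
  have pl: "p \<noteq> l" using Elp irr by auto
  have "(x, y) \<in> (adj_in E S)\<^sup>*" using conn x y unfolding connected_on_def by blast
  then have "(y = l \<and> (x, p) \<in> (adj_in E (S - {l}))\<^sup>*) \<or> (y \<noteq> l \<and> (x, y) \<in> (adj_in E (S - {l}))\<^sup>*)"
  proof (induction rule: rtrancl_induct)
    case base
    then show ?case using x by auto
  next
    case (step y z)
    from step.hyps(2) have yz: "y \<in> S" "z \<in> S" "E y z" by (auto simp: adj_in_def)
    show ?case
    proof (cases "y = l")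
      case True
      then have "z = p" using lf yz by auto
      then show ?thesis using step.IH True pl by auto
    next
      case False
      with step.IH have IH: "(x, y) \<in> (adj_in E (S - {l}))\<^sup>*" by auto
      show ?thesis
      proof (cases "z = l")
        case True
        then have "y = p" using lf yz sym by auto
        then show ?thesis using IH True by auto
      next
        case False
        have "(y, z) \<in> adj_in E (S - {l})" using yz False \<open>y \<noteq> l\<close> by (auto simp: adj_in_def)
        then show ?thesis using IH False by (meson rtrancl.rtrancl_into_rtrancl)
      qed
    qed
  qed
  then show "(x, y) \<in> (adj_in E (S - {l}))\<^sup>*" using y by auto
qed

lemma path_rev:
  assumes "is_path E S xs" "\<forall>x y. E x y \<longrightarrow> E y x"
  shows "is_path E S (rev xs)"
  unfolding is_path_def
proof (intro conjI allI impI)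
  show "distinct (rev xs)" "set (rev xs) \<subseteq> S" using assms unfolding is_path_def by auto
  fix i assume i: "Suc i < length (rev xs)"
  have "E (xs ! (length xs - Suc (Suc i))) (xs ! Suc (length xs - Suc (Suc i)))"
    using assms(1) i unfolding is_path_def by auto
  moreover have "Suc (length xs - Suc (Suc i)) = length xs - Suc i" using i by auto
  ultimately have "E (xs ! (length xs - Suc (Suc i))) (xs ! (length xs - Suc i))" by simp
  then have "E (xs ! (length xs - Suc i)) (xs ! (length xs - Suc (Suc i)))" using assms(2) by blast
  then show "E (rev xs ! i) (rev xs ! Suc i)" using i by (simp add: rev_nth)
qed

lemma end_leaf:
  assumes tree: "is_tree V E" and SV: "S \<subseteq> V"
    and p: "is_path E S xs" and mx: "\<forall>ys. is_path E S ys \<longrightarrow> length ys \<le> length xs"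
    and len: "length xs \<ge> 2"
  shows "is_leaf_in E S (hd xs)"
proof -
  have sym: "\<forall>x y. E x y \<longrightarrow> E y x" and irr: "\<forall>x. \<not> E x x"
    and nocyc: "\<not> (\<exists>xs. set xs \<subseteq> V \<and> is_cycle E xs)" using tree unfolding is_tree_def by auto
  have dist: "distinct xs" and setS: "set xs \<subseteq> S" and ed: "\<forall>i. Suc i < length xs \<longrightarrow> E (xs!i) (xs!Suc i)"
    using p unfolding is_path_def by auto
  define a where "a = hd xs"
  have a0: "a = xs ! 0" using len by (cases xs) (auto simp: a_def)
  have "{u\<in>S. E a u} = {xs ! 1}"
  proof
    show "{xs ! 1} \<subseteq> {u\<in>S. E a u}" using ed len setS a0 by (auto simp: nth_mem)
  next
    show "{u\<in>S. E a u} \<subseteq> {xs ! 1}"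
    proof
      fix c assume c: "c \<in> {u\<in>S. E a u}"
      show "c \<in> {xs ! 1}"
      proof (cases "c \<in> set xs")
        case False
        have "is_path E S (c # xs)" unfolding is_path_def
        proof (intro conjI allI impI)
          show "distinct (c # xs)" using False dist by auto
          show "set (c # xs) \<subseteq> S" using c setS by auto
          fix i assume i: "Suc i < length (c # xs)"
          show "E ((c # xs) ! i) ((c # xs) ! Suc i)"
          proof (cases i)
            case 0 then show ?thesis using c sym a0 by auto
          next
            case (Suc k) then show ?thesis using ed i by auto
          qed
        qed
        then show ?thesis using mx by fastforce
      next
        case True
        then obtain j where j: "j < length xs" "c = xs ! j" by (auto simp: in_set_conv_nth)
        consider "j = 0" | "j = 1" | "j \<ge> 2" by linarith
        then show ?thesis
        proof cases
          case 1 then show ?thesis using c j a0 irr by auto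
        next
          case 2 then show ?thesis using j by auto
        next
          case 3
          define ys where "ys = take (Suc j) xs"
          have lys: "length ys = Suc j" using j by (simp add: ys_def)
          have "is_cycle E ys" unfolding is_cycle_def
          proof (intro conjI allI impI)
            show "3 \<le> length ys" using lys 3 by simp
            show "distinct ys" using dist by (simp add: ys_def)
            fix i assume "Suc i < length ys"
            then show "E (ys ! i) (ys ! Suc i)" using ed lys j by (auto simp: ys_def)
          next
            have "last ys = xs ! j" using j by (simp add: ys_def take_Suc_conv_app_nth)
            moreover have "hd ys = a" using len by (cases xs) (auto simp: ys_def a_def)
            ultimately show "E (last ys) (hd ys)" using c j sym by auto
          qed
          moreover have "set ys \<subseteq> V" using setS SV set_take_subset[of "Suc j" xs] by (auto simp: ys_def)
          ultimately show ?thesis using nocyc by blast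
        qed
      qed
    qed
  qed
  moreover have "a \<in> set xs" using len by (cases xs) (auto simp: a_def)
  then have "a \<in> S" using setS by blast
  ultimately show ?thesis unfolding is_leaf_in_def a_def by simp
qed

lemma two_leaves:
  assumes tree: "is_tree V E" and SV: "S \<subseteq> V" and conn: "connected_on E S" and c2: "card S \<ge> 2"
  shows "\<exists>a b. a \<noteq> b \<and> is_leaf_in E S a \<and> is_leaf_in E S b"
proof -
  have sym: "\<forall>x y. E x y \<longrightarrow> E y x" and irr: "\<forall>x. \<not> E x x" and fin: "finite S"
    using tree SV finite_subset unfolding is_tree_def by auto
  have "S \<noteq> {}" using c2 by (cases "S = {}") auto
  then obtain x where x: "x \<in> S" by blast
  have "card (S - {x}) \<ge> 1" using c2 fin x by simp
  then have "S - {x} \<noteq> {}" by (cases "S - {x} = {}") auto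
  then obtain y where y: "y \<in> S - {x}" by blast
  have xy: "x \<in> S" "y \<in> S" "x \<noteq> y" using x y by auto
  obtain z where z: "z \<in> S" "E x z" using has_nbr[OF conn xy] by auto
  have "is_path E S [x, z]" using z xy irr unfolding is_path_def by (auto simp: less_Suc_eq)
  moreover have "\<forall>ys. is_path E S ys \<longrightarrow> length ys < Suc (card S)"
  proof (intro allI impI)
    fix ys assume "is_path E S ys"
    then have d: "distinct ys" and ss: "set ys \<subseteq> S" unfolding is_path_def by auto
    have "length ys = card (set ys)" using distinct_card[OF d] by simp
    also have "\<dots> \<le> card S" using card_mono[OF fin ss] .
    finally show "length ys < Suc (card S)" by simp
  qed
  ultimately have "\<exists>xs. is_path E S xs \<and> (\<forall>ys. is_path E S ys \<longrightarrow> length ys \<le> length xs)"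
    by (rule Lattices_Big.ex_has_greatest_nat)
  then obtain xs where xs: "is_path E S xs" and mx: "\<forall>ys. is_path E S ys \<longrightarrow> length ys \<le> length xs"
    by blast
  have len: "length xs \<ge> 2" using mx \<open>is_path E S [x, z]\<close> by fastforce
  have l1: "is_leaf_in E S (hd xs)" using end_leaf[OF tree SV xs mx len] .
  have xsr: "is_path E S (rev xs)" using path_rev[OF xs sym] .
  have l2: "is_leaf_in E S (hd (rev xs))" using end_leaf[OF tree SV xsr] mx len by simp
  have "hd xs \<noteq> hd (rev xs)"
  proof -
    have d: "distinct xs" using xs unfolding is_path_def by auto
    have ne: "xs \<noteq> []" using len by auto
    have "hd xs = xs ! 0" "hd (rev xs) = xs ! (length xs - 1)"
      using hd_conv_nth[OF ne] last_conv_nth[OF ne] hd_rev[of xs] by auto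
    moreover have "xs ! 0 \<noteq> xs ! (length xs - 1)"
    proof -
      have i: "0 < length xs" "length xs - 1 < length xs" using len by auto
      have "(xs ! 0 = xs ! (length xs - 1)) = (0 = length xs - 1)"
        by (rule nth_eq_iff_index_eq[OF d i])
      then show ?thesis using len by simp
    qed
    ultimately show ?thesis by metis
  qed
  then show ?thesis using l1 l2 by blast
qed

definition mx :: "('a \<Rightarrow> nat) \<Rightarrow> 'a set \<Rightarrow> 'a" where
  "mx f A = (SOME x. x \<in> A \<and> (\<forall>y\<in>A. f y \<le> f x))"

lemma mx_prop:
  assumes "finite A" "A \<noteq> {}"
  shows "mx f A \<in> A \<and> (\<forall>y\<in>A. f y \<le> f (mx f A))"
proof -
  have "Max (f ` A) \<in> f ` A" using assms by simp
  then obtain x where x: "x \<in> A" "f x = Max (f ` A)" by auto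
  have "\<forall>y\<in>A. f y \<le> f x" using x assms by simp
  then have "\<exists>x. x \<in> A \<and> (\<forall>y\<in>A. f y \<le> f x)" using x by blast
  then show ?thesis unfolding mx_def by (rule someI_ex)
qed

lemma pick:
  assumes fin: "finite A" and l: "l \<in> A" and AV: "A \<subseteq> V" and inj: "inj_on f V"
    and bnd: "\<forall>x\<in>A. x \<noteq> p \<longrightarrow> f x \<le> f l"
  shows "l \<in> {mx f A, mx f (A - {mx f A})}"
proof (cases "mx f A = l")
  case True then show ?thesis by simp
next
  case False
  have m: "mx f A \<in> A" "f l \<le> f (mx f A)" using mx_prop[OF fin] l by auto
  have mp: "mx f A = p"
  proof (rule ccontr)
    assume "mx f A \<noteq> p"
    then have "f (mx f A) = f l" using bnd m by fastforce
    then show False using inj m l AV False unfolding inj_on_def by blast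
  qed
  have fin2: "finite (A - {mx f A})" and ne: "A - {mx f A} \<noteq> {}" using fin l False by auto
  have m2: "mx f (A - {mx f A}) \<in> A - {mx f A}" "f l \<le> f (mx f (A - {mx f A}))"
    using mx_prop[OF fin2 ne] l False by auto
  have "mx f (A - {mx f A}) = l"
  proof (rule ccontr)
    assume ne2: "mx f (A - {mx f A}) \<noteq> l"
    have "f (mx f (A - {mx f A})) = f l" using bnd m2 mp by fastforce
    then show False using inj m2 l AV ne2 unfolding inj_on_def by blast
  qed
  then show ?thesis by simp
qed

definition leaves :: "('a \<Rightarrow> 'a \<Rightarrow> bool) \<Rightarrow> 'a set \<Rightarrow> 'a set" where
  "leaves E S = {v. is_leaf_in E S v}"

definition nu :: "('a \<Rightarrow> nat) \<Rightarrow> ('a \<Rightarrow> 'a \<Rightarrow> bool) \<Rightarrow> 'a set \<Rightarrow> 'a set" where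
  "nu f E S = (if card S \<ge> 2 then {mx f (leaves E S), mx f (leaves E S - {mx f (leaves E S)})} else S)"

lemma key:
  assumes tree: "is_tree V E" and inj: "inj_on f V" and S: "S \<in> subtrees V E" and c2: "card S \<ge> 2"
    and w: "is_leaf_in E S w" and l: "is_leaf_in E S l" and lw: "l \<noteq> w"
    and bnd: "\<forall>x\<in>leaves E S - {w}. f x \<le> f l"
  shows "l \<in> nu f E (S - {w})"
proof -
  have sym: "\<forall>x y. E x y \<longrightarrow> E y x" and irr: "\<forall>x. \<not> E x x" and finV: "finite V"
    using tree unfolding is_tree_def by auto
  have SV: "S \<subseteq> V" and conn: "connected_on E S" using S unfolding subtrees_def by auto
  have fin: "finite S" using SV finV finite_subset by auto
  obtain p where p: "{u\<in>S. E w u} = {p}" using leaf_nbr[OF w] by blast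
  define S' where "S' = S - {w}"
  have lS': "l \<in> S'" using l lw unfolding S'_def is_leaf_in_def by auto
  have wS: "w \<in> S" using w unfolding is_leaf_in_def by auto
  have cS': "card S' = card S - 1" using wS fin unfolding S'_def by simp
  show ?thesis
  proof (cases "card S' \<ge> 2")
    case False
    then have "card S' = 1" using cS' c2 by simp
    then obtain t where "S' = {t}" by (rule card_1_singletonE)
    then have "S' = {l}" using lS' by simp
    then show ?thesis using False unfolding nu_def S'_def by simp
  next
    case True
    have conn': "connected_on E S'" unfolding S'_def using remove_leaf_conn[OF conn p sym irr] .
    have finS': "finite S'" using fin unfolding S'_def by simp
    have nEw: "\<not> E l w"
    proof
      assume Elw: "E l w"
      obtain q where q: "{u\<in>S. E l u} = {q}" using leaf_nbr[OF l] by blast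
      then have "q = w" using Elw wS by auto
      have "card (S' - {l}) \<ge> 1" using True finS' lS' by simp
      then have "S' - {l} \<noteq> {}" by (cases "S' - {l} = {}") auto
      then obtain y where y: "y \<in> S'" "y \<noteq> l" by blast
      obtain z where "z \<in> S'" "E l z" using has_nbr[OF conn' lS' y(1)] y(2) by metis
      then show False using q \<open>q = w\<close> unfolding S'_def by auto
    qed
    have "{u\<in>S'. E l u} = {u\<in>S. E l u}" using nEw unfolding S'_def by auto
    then have lL': "l \<in> leaves E S'" using l lS' unfolding leaves_def is_leaf_in_def by simp
    have L'sub: "leaves E S' \<subseteq> S'" unfolding leaves_def is_leaf_in_def by auto
    have bnd': "\<forall>x\<in>leaves E S'. x \<noteq> p \<longrightarrow> f x \<le> f l"
    proof (intro ballI impI)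
      fix x assume x: "x \<in> leaves E S'" "x \<noteq> p"
      have xS': "x \<in> S'" using x L'sub by auto
      have "\<not> E x w"
      proof
        assume "E x w"
        then have "x \<in> {u\<in>S. E w u}" using sym xS' unfolding S'_def by auto
        then show False using p x(2) by auto
      qed
      then have "{u\<in>S'. E x u} = {u\<in>S. E x u}" unfolding S'_def by auto
      then have "x \<in> leaves E S - {w}" using x xS' unfolding leaves_def is_leaf_in_def S'_def by auto
      then show "f x \<le> f l" using bnd by auto
    qed
    have "l \<in> {mx f (leaves E S'), mx f (leaves E S' - {mx f (leaves E S')})}"
      using pick[OF finite_subset[OF L'sub finS'] lL' _ inj bnd'] L'sub SV unfolding S'_def by blast
    then show ?thesis using True unfolding nu_def S'_def by simp
  qed
qed

theorem lemma4p3: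
  fixes V :: "'a set" and E :: "'a \<Rightarrow> 'a \<Rightarrow> bool"
  assumes "is_tree V E"
  shows "\<exists>\<nu>. peeling V E \<nu>"
proof -
  have finV: "finite V" using assms unfolding is_tree_def by auto
  obtain f :: "'a \<Rightarrow> nat" and n where inj: "inj_on f V" using finite_imp_inj_to_nat_seg[OF finV] by blast
  have "peeling V E (nu f E)" unfolding peeling_def
  proof (intro conjI ballI impI)
    fix v assume "v \<in> V" then show "nu f E {v} = {v}" unfolding nu_def by simp
  next
    fix S assume S: "S \<in> subtrees V E" and c2: "2 \<le> card S"
    have SV: "S \<subseteq> V" and conn: "connected_on E S" using S unfolding subtrees_def by auto
    have fin: "finite S" using SV finV finite_subset by auto
    define L where "L = leaves E S"
    have finL: "finite L" using fin unfolding L_def leaves_def is_leaf_in_def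
      by (metis (no_types, lifting) finite_subset mem_Collect_eq subsetI)
    obtain a b where ab: "a \<noteq> b" "is_leaf_in E S a" "is_leaf_in E S b"
      using two_leaves[OF assms SV conn c2] by blast
    have aL: "a \<in> L" and bL: "b \<in> L" using ab unfolding L_def leaves_def by auto
    define l1 where "l1 = mx f L"
    define l2 where "l2 = mx f (L - {l1})"
    have m1: "l1 \<in> L" "\<forall>y\<in>L. f y \<le> f l1" using mx_prop[OF finL] aL unfolding l1_def by auto
    have ne: "L - {l1} \<noteq> {}" using aL bL ab by auto
    have m2: "l2 \<in> L - {l1}" "\<forall>y\<in>L - {l1}. f y \<le> f l2" using mx_prop[OF _ ne] finL unfolding l2_def by auto
    have lf1: "is_leaf_in E S l1" and lf2: "is_leaf_in E S l2" using m1 m2 unfolding L_def leaves_def by auto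
    have nuS: "nu f E S = {l1, l2}" using c2 unfolding nu_def l1_def l2_def L_def by simp
    have "l1 \<in> nu f E (S - {l2})"
      using key[OF assms inj S c2 lf2 lf1] m1 m2 unfolding L_def by auto
    moreover have "l2 \<in> nu f E (S - {l1})"
      using key[OF assms inj S c2 lf1 lf2] m1 m2 unfolding L_def by auto
    ultimately show "\<exists>u w. u \<noteq> w \<and> is_leaf_in E S u \<and> is_leaf_in E S w \<and> nu f E S = {u, w} \<and>
               u \<in> nu f E (S - {w}) \<and> w \<in> nu f E (S - {u})"
      using lf1 lf2 m2 nuS by blast
  qed
  then show ?thesis by blast
qed

end
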